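(* Let $s\ge1$ and let $\vec M=(M_1,\dots,M_n)$ be any vector of positive integers with $2M_i+1\equiv0\pmod{p^s}$ for all $i$. Then for every $t=1,\dots,s$ one has $\mathcal M^t_{p^s}(\vec M)=\mathcal M^t_{p^s}$. In particular the filtration $0=\mathcal M^0_{p^s}(\vec M)\subset\mathcal M^1_{p^s}(\vec M)\subset\dots\subset\mathcal M^s_{p^s}(\vec M)$ does not depend on the choice of $\vec M$ and coincides with the filtration $0=\mathcal M^0_{p^s}\subset\dots\subset\mathcal M^s_{p^s}=\mathcal M_{p^s}$.
   Context: Let $p$ be an odd prime, $g\ge1$, $n=2g+1$, with $p>n$; $z=(z_1,\dots,z_n)$; $\pi_s$ denotes reduction modulo $p^s$ on $\mathbb Z[z]^n$. Quasi-constants: $f\in\mathbb Z[z]$ is a quasi-constant modulo $p^r$ if $\partial f/\partial z_i\in p^r\mathbb Z[z]$ for all $i$; these form a ring $\mathbb Z[z]_{p^r}$. For a positive integer $r$ put $M_r=(p^r-1)/2$, $\Phi_{p^r}(x,z)=\prod_{i=1}^n(x-z_i)^{M_r}$, expand $\Big(\frac{\Phi_{p^r}}{x-z_1},\dots,\frac{\Phi_{p^r}}{x-z_n}\Big)=\sum_iP^i_{p^r}(z)x^i$ with $P^i_{p^r}(z)\in\mathbb Z[z]^n$, and set $I^{[lp^r-1]}_{p^r}(z)=P^{lp^r-1}_{p^r}(z)$. For $1\le t\le s$ define $\mathcal M^t_{p^s}=\{\pi_s(\sum_{r=1}^t\sum_{l=1}^g c_{r,l}(z)\,p^{s-r}I^{[lp^r-1]}_{p^r}(z))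 : c_{r,l}\in\mathbb Z[z]_{p^r}\}$, $\mathcal M^0_{p^s}=0$, $\mathcal M_{p^s}=\mathcal M^s_{p^s}$. For $\vec M=(M_1,\dots,M_n)$ put $\Phi(x,z,\vec M)=\prod_{i=1}^n(x-z_i)^{M_i}$, expand $\Big(\frac{\Phi(x,z,\vec M)}{x-z_1},\dots,\frac{\Phi(x,z,\vec M)}{x-z_n}\Big)=\sum_iP^i(z,\vec M)x^i$, and set $I^{[m-1]}(z,\vec M)=P^{m-1}(z,\vec M)$. For $1\le t\le s$ define $\mathcal M^t_{p^s}(\vec M)=\{\pi_s(\sum_{r=1}^t\sum_{l\ge1}c_{r,l}(z)\,p^{s-r}I^{[lp^r-1]}(z,\vec M)) : c_{r,l}\in\mathbb Z[z]_{p^r}\text{, finitely many nonzero}\}$ and $\mathcal M^0_{p^s}(\vec M)=0$. *)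

theory Defs
  imports "HOL-Library.Poly_Mapping" "HOL-Computational_Algebra.Polynomial"
begin
text \<open>Z[z]: integer polynomials, monomials are finitely supported exponent vectors
  (variable z_(i+1) has index i); the ring structure is the convolution ring of Poly_Mapping.\<close>
type_synonym mpoly = "(nat \<Rightarrow>\<^sub>0 nat) \<Rightarrow>\<^sub>0 int"

definition Var :: "nat \<Rightarrow> mpoly" where
  "Var i = Poly_Mapping.single (Poly_Mapping.single i 1) 1"

definition in_Zz :: "nat \<Rightarrow> mpoly \<Rightarrow> bool" where
  "in_Zz n f \<longleftrightarrow> (\<forall>m \<in> Poly_Mapping.keys f. Poly_Mapping.keys m \<subseteq> {0..<n})"

definition pdz :: "nat \<Rightarrow> mpoly \<Rightarrow> mpoly" where
  "pdz i f = (\<Sum>m \<in> Poly_Mapping.keys f.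
      Poly_Mapping.single (m - Poly_Mapping.single i 1) (int (Poly_Mapping.lookup m i) * Poly_Mapping.lookup f m))"

definition quasi_const :: "nat \<Rightarrow> nat \<Rightarrow> nat \<Rightarrow> mpoly \<Rightarrow> bool" where
  "quasi_const n p r f \<longleftrightarrow> in_Zz n f \<and>
     (\<forall>i < n. \<exists>h. in_Zz n h \<and> pdz i f = of_int (int p ^ r) * h)"

definition pi_mod :: "nat \<Rightarrow> nat \<Rightarrow> mpoly \<Rightarrow> mpoly" where
  "pi_mod p s f = Poly_Mapping.map (\<lambda>a. a mod (int p ^ s)) f"

text \<open>The j-th component (j < n) of \<Phi>(x,z,M)/(x - z_j) as a polynomial in x over Z[z].\<close>
definition Phi_quot :: "nat \<Rightarrow> (nat \<Rightarrow> nat) \<Rightarrow> nat \<Rightarrow> mpoly poly" where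
  "Phi_quot n M j = [:- Var j, 1:] ^ (M j - 1) *
      (\<Prod>i \<in> {0..<n} - {j}. [:- Var i, 1:] ^ (M i))"

text \<open>I^[k](z, M) = P^k(z, M) \<in> Z[z]^n (components indexed 0..n-1, zero beyond).\<close>
definition Ivec :: "nat \<Rightarrow> (nat \<Rightarrow> nat) \<Rightarrow> nat \<Rightarrow> nat \<Rightarrow> mpoly" where
  "Ivec n M k j = (if j < n then coeff (Phi_quot n M j) k else 0)"

definition Istd :: "nat \<Rightarrow> nat \<Rightarrow> nat \<Rightarrow> nat \<Rightarrow> nat \<Rightarrow> mpoly" where
  "Istd n p r l j = Ivec n (\<lambda>_. (p ^ r - 1) div 2) (l * p ^ r - 1) j"

definition Mstd :: "nat \<Rightarrow> nat \<Rightarrow> nat \<Rightarrow> nat \<Rightarrow> (nat \<Rightarrow> mpoly) set" where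
  "Mstd p g s t = {(\<lambda>j. pi_mod p s
        (\<Sum>r \<in> {1..t}. \<Sum>l \<in> {1..g}. c r l * of_int (int p ^ (s - r)) * Istd (2*g+1) p r l j))
      | c. \<forall>r \<in> {1..t}. \<forall>l \<in> {1..g}. quasi_const (2*g+1) p r (c r l)}"

definition Mgen :: "nat \<Rightarrow> nat \<Rightarrow> nat \<Rightarrow> nat \<Rightarrow> (nat \<Rightarrow> nat) \<Rightarrow> (nat \<Rightarrow> mpoly) set" where
  "Mgen p g s t M = {(\<lambda>j. pi_mod p s
        (\<Sum>r \<in> {1..t}. \<Sum>l \<in> {l. 1 \<le> l \<and> c r l \<noteq> 0}.
            c r l * of_int (int p ^ (s - r)) * Ivec (2*g+1) M (l * p ^ r - 1) j))
      | c. \<forall>r \<in> {1..t}. finite {l. c r l \<noteq> 0} \<and>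
             (\<forall>l \<ge> 1. quasi_const (2*g+1) p r (c r l))}"

end

theory Submission
  imports Defs
begin


abbreviation e1 :: "nat \<Rightarrow> (nat \<Rightarrow>\<^sub>0 nat)" where "e1 i \<equiv> Poly_Mapping.single i 1"

lemma lookup_ofint_mult: "Poly_Mapping.lookup (of_int d * (f::mpoly)) k = d * Poly_Mapping.lookup f k"
proof -
  have "Poly_Mapping.single 0 (of_int d :: int) = (of_int d :: mpoly)" by (rule single_of_int)
  then have "(of_int d :: mpoly) = Poly_Mapping.single 0 d" by simp
  then have "of_int d * f = Poly_Mapping.map ((*) d) f" by (simp add: mult_map_scale_conv_mult)
  then show ?thesis by (simp add: Poly_Mapping.map.rep_eq when_def)
qed

lemma lookup_ofnat_mult: "Poly_Mapping.lookup (of_nat d * (f::mpoly)) k = int d * Poly_Mapping.lookup f k"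
  using lookup_ofint_mult[of "int d" f k] by simp

lemma lookup_pi_mod: "Poly_Mapping.lookup (pi_mod p s f) k = Poly_Mapping.lookup f k mod (int p ^ s)"
  by (simp add: pi_mod_def Poly_Mapping.map.rep_eq when_def)

lemma pi_mod_cong: "f = g + of_int (int p ^ s) * h \<Longrightarrow> pi_mod p s f = pi_mod p s g"
  apply (rule poly_mapping_eqI)
  apply (simp only: lookup_pi_mod Poly_Mapping.lookup_add lookup_ofint_mult)
  by simp

lemma nat_pm_minus_single:
  assumes "Poly_Mapping.lookup a i \<ge> 1"
  shows "(a - e1 i = k) \<longleftrightarrow> (a = k + e1 i)"
proof
  assume "a - e1 i = k"
  then show "a = k + e1 i"
    using assms by (auto intro!: poly_mapping_eqI simp: lookup_minus Poly_Mapping.lookup_add lookup_single when_def)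
next
  assume "a = k + e1 i"
  then show "a - e1 i = k"
    by (auto intro!: poly_mapping_eqI simp: lookup_minus Poly_Mapping.lookup_add lookup_single when_def)
qed

lemma lookup_pdz: "Poly_Mapping.lookup (pdz i f) k = int (Poly_Mapping.lookup k i + 1) * Poly_Mapping.lookup f (k + e1 i)"
proof -
  have "Poly_Mapping.lookup (pdz i f) k = (\<Sum>m\<in>Poly_Mapping.keys f. if m = k + e1 i then int (Poly_Mapping.lookup k i + 1) * Poly_Mapping.lookup f m else 0)"
    unfolding pdz_def lookup_sum
  proof (rule sum.cong[OF refl])
    fix m assume "m \<in> Poly_Mapping.keys f"
    show "Poly_Mapping.lookup (Poly_Mapping.single (m - e1 i) (int (Poly_Mapping.lookup m i) * Poly_Mapping.lookup f m)) k =
      (if m = k + e1 i then int (Poly_Mapping.lookup k i + 1) * Poly_Mapping.lookup f m else 0)"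
    proof (cases "Poly_Mapping.lookup m i \<ge> 1")
      case True
      then show ?thesis using nat_pm_minus_single[OF True, of k]
        by (auto simp: lookup_single when_def Poly_Mapping.lookup_add)
    next
      case False
      then have "m \<noteq> k + e1 i" by (auto simp: Poly_Mapping.lookup_add)
      with False show ?thesis by (simp add: lookup_single when_def)
    qed
  qed
  also have "\<dots> = int (Poly_Mapping.lookup k i + 1) * Poly_Mapping.lookup f (k + e1 i)"
    by (auto simp: sum.delta in_keys_iff)
  finally show ?thesis .
qed

lemma pdz_add: "pdz i (f + g) = pdz i f + pdz i g"
  by (rule poly_mapping_eqI) (simp add: lookup_pdz Poly_Mapping.lookup_add algebra_simps)
lemma pdz_uminus: "pdz i (- f) = - pdz i f"
  by (rule poly_mapping_eqI) (simp add: lookup_pdz)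
lemma pdz_diff: "pdz i (f - g) = pdz i f - pdz i g"
  by (rule poly_mapping_eqI) (simp add: lookup_pdz lookup_minus algebra_simps)
lemma pdz_zero[simp]: "pdz i 0 = 0"
  by (rule poly_mapping_eqI) (simp add: lookup_pdz)
lemma pdz_sum: "pdz i (\<Sum>x\<in>A. f x) = (\<Sum>x\<in>A. pdz i (f x))"
  by (induction A rule: infinite_finite_induct) (auto simp: pdz_add)
lemma pdz_single: "pdz i (Poly_Mapping.single a c) = Poly_Mapping.single (a - e1 i) (int (Poly_Mapping.lookup a i) * c)"
proof (rule poly_mapping_eqI)
  fix k
  show "Poly_Mapping.lookup (pdz i (Poly_Mapping.single a c)) k = Poly_Mapping.lookup (Poly_Mapping.single (a - e1 i) (int (Poly_Mapping.lookup a i) * c)) k"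
  proof (cases "Poly_Mapping.lookup a i \<ge> 1")
    case True
    then show ?thesis using nat_pm_minus_single[OF True, of k]
      by (auto simp: lookup_pdz lookup_single when_def Poly_Mapping.lookup_add)
  next
    case False
    then have "a \<noteq> k + e1 i" by (auto simp: Poly_Mapping.lookup_add)
    with False show ?thesis by (auto simp: lookup_pdz lookup_single when_def)
  qed
qed

lemma mp_expand: "(f::mpoly) = (\<Sum>a\<in>Poly_Mapping.keys f. Poly_Mapping.single a (Poly_Mapping.lookup f a))"
  by (rule poly_mapping_eqI) (auto simp: lookup_sum lookup_single when_def sum.delta in_keys_iff)

lemma pdz_mult_single_single:
  "pdz i (Poly_Mapping.single a c * Poly_Mapping.single b d) =
   pdz i (Poly_Mapping.single a c) * Poly_Mapping.single b d + Poly_Mapping.single a c * pdz i (Poly_Mapping.single b d)"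
proof -
  have 1: "Poly_Mapping.single (a - e1 i + b) (int (Poly_Mapping.lookup a i) * c * d) = Poly_Mapping.single (a + b - e1 i) (int (Poly_Mapping.lookup a i) * c * d)"
  proof (cases "Poly_Mapping.lookup a i \<ge> 1")
    case True
    then have "a - e1 i + b = a + b - e1 i"
      by (auto intro!: poly_mapping_eqI simp: lookup_minus Poly_Mapping.lookup_add lookup_single when_def)
    then show ?thesis by simp
  next
    case False then have "Poly_Mapping.lookup a i = 0" by simp
    then show ?thesis by simp
  qed
  have 2: "Poly_Mapping.single (a + (b - e1 i)) (c * (int (Poly_Mapping.lookup b i) * d)) = Poly_Mapping.single (a + b - e1 i) (int (Poly_Mapping.lookup b i) * c * d)"
  proof (cases "Poly_Mapping.lookup b i \<ge> 1")
    case True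
    then have "a + (b - e1 i) = a + b - e1 i"
      by (auto intro!: poly_mapping_eqI simp: lookup_minus Poly_Mapping.lookup_add lookup_single when_def)
    then show ?thesis by (simp add: algebra_simps)
  next
    case False then have "Poly_Mapping.lookup b i = 0" by simp
    then show ?thesis by simp
  qed
  have 3: "pdz i (Poly_Mapping.single a c * Poly_Mapping.single b d) = Poly_Mapping.single (a+b-e1 i) (int (Poly_Mapping.lookup a i)*c*d) + Poly_Mapping.single (a+b-e1 i) (int (Poly_Mapping.lookup b i)*c*d)"
  proof -
    have "pdz i (Poly_Mapping.single a c * Poly_Mapping.single b d) = Poly_Mapping.single (a+b-e1 i) (int (Poly_Mapping.lookup (a+b) i) * (c*d))"
      by (simp add: mult_single pdz_single)
    also have "\<dots> = Poly_Mapping.single (a+b-e1 i) (int (Poly_Mapping.lookup a i)*c*d + int (Poly_Mapping.lookup b i)*c*d)"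
      by (simp add: Poly_Mapping.lookup_add algebra_simps)
    finally show ?thesis by (simp only: single_add)
  qed
  show ?thesis
    apply (subst 3)
    apply (simp only: pdz_single mult_single)
    apply (simp only: 1 2)
    done
qed

lemma pdz_mult_single:
  "pdz i (Poly_Mapping.single a c * g) = pdz i (Poly_Mapping.single a c) * g + Poly_Mapping.single a c * pdz i g"
proof -
  have "pdz i (Poly_Mapping.single a c * g) = pdz i (\<Sum>b\<in>Poly_Mapping.keys g. Poly_Mapping.single a c * Poly_Mapping.single b (Poly_Mapping.lookup g b))"
    by (subst mp_expand[of g]) (simp add: sum_distrib_left)
  also have "\<dots> = (\<Sum>b\<in>Poly_Mapping.keys g. pdz i (Poly_Mapping.single a c) * Poly_Mapping.single b (Poly_Mapping.lookup g b) +
       Poly_Mapping.single a c * pdz i (Poly_Mapping.single b (Poly_Mapping.lookup g b)))"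
    by (simp add: pdz_sum pdz_mult_single_single)
  also have "\<dots> = pdz i (Poly_Mapping.single a c) * (\<Sum>b\<in>Poly_Mapping.keys g. Poly_Mapping.single b (Poly_Mapping.lookup g b)) +
      Poly_Mapping.single a c * pdz i (\<Sum>b\<in>Poly_Mapping.keys g. Poly_Mapping.single b (Poly_Mapping.lookup g b))"
    by (simp add: sum.distrib sum_distrib_left pdz_sum)
  finally show ?thesis by (simp flip: mp_expand)
qed

lemma pdz_mult: "pdz i (f * g) = pdz i f * g + f * pdz i g"
proof -
  have "pdz i (f * g) = pdz i (\<Sum>a\<in>Poly_Mapping.keys f. Poly_Mapping.single a (Poly_Mapping.lookup f a) * g)"
    by (subst mp_expand[of f]) (simp add: sum_distrib_right)
  also have "\<dots> = (\<Sum>a\<in>Poly_Mapping.keys f. pdz i (Poly_Mapping.single a (Poly_Mapping.lookup f a)) * g + Poly_Mapping.single a (Poly_Mapping.lookup f a) * pdz i g)"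
    by (simp add: pdz_sum pdz_mult_single)
  also have "\<dots> = pdz i (\<Sum>a\<in>Poly_Mapping.keys f. Poly_Mapping.single a (Poly_Mapping.lookup f a)) * g + (\<Sum>a\<in>Poly_Mapping.keys f. Poly_Mapping.single a (Poly_Mapping.lookup f a)) * pdz i g"
    by (simp add: sum.distrib sum_distrib_right pdz_sum)
  finally show ?thesis by (simp flip: mp_expand)
qed

lemma plus_e1_ne0: "k + e1 i \<noteq> 0"
proof
  assume "k + e1 i = 0"
  then have "Poly_Mapping.lookup (k + e1 i) i = 0" by simp
  then show False by (simp add: Poly_Mapping.lookup_add)
qed

lemma pdz_of_int[simp]: "pdz i (of_int d) = 0"
proof (rule poly_mapping_eqI)
  fix k
  have "k + e1 i \<noteq> 0" by (rule plus_e1_ne0)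
  then show "Poly_Mapping.lookup (pdz i (of_int d)) k = Poly_Mapping.lookup 0 k"
    by (simp add: lookup_pdz lookup_of_int when_def)
qed
lemma pdz_of_nat[simp]: "pdz i (of_nat d) = 0"
  using pdz_of_int[of i "int d"] by simp
lemma pdz_one[simp]: "pdz i 1 = 0"
  using pdz_of_int[of i 1] by simp
lemma pdz_ofint_mult: "pdz i (of_int d * f) = of_int d * pdz i f"
  by (simp add: pdz_mult)



lemma in_Zz_0[simp]: "in_Zz n 0" by (simp add: in_Zz_def)
lemma in_Zz_single: "Poly_Mapping.keys a \<subseteq> {0..<n} \<Longrightarrow> in_Zz n (Poly_Mapping.single a c)"
  by (simp add: in_Zz_def)
lemma in_Zz_of_int[simp]: "in_Zz n (of_int d)"
proof -
  have "Poly_Mapping.single 0 (of_int d :: int) = (of_int d :: mpoly)" by (rule single_of_int)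
  then have "(of_int d :: mpoly) = Poly_Mapping.single 0 d" by simp
  then show ?thesis by (simp add: in_Zz_def)
qed
lemma in_Zz_1[simp]: "in_Zz n 1" using in_Zz_of_int[of n 1] by simp
lemma in_Zz_of_nat[simp]: "in_Zz n (of_nat d)" using in_Zz_of_int[of n "int d"] by simp
lemma in_Zz_add[simp]: "in_Zz n f \<Longrightarrow> in_Zz n g \<Longrightarrow> in_Zz n (f + g)"
  unfolding in_Zz_def
proof
  fix m assume "\<forall>m\<in>Poly_Mapping.keys f. Poly_Mapping.keys m \<subseteq> {0..<n}" "\<forall>m\<in>Poly_Mapping.keys g. Poly_Mapping.keys m \<subseteq> {0..<n}"
    "m \<in> Poly_Mapping.keys (f + g)"
  moreover have "m \<in> Poly_Mapping.keys f \<union> Poly_Mapping.keys g" using keys_add[of f g] \<open>m \<in> _\<close> by (rule subsetD)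
  ultimately show "Poly_Mapping.keys m \<subseteq> {0..<n}" by blast
qed
lemma in_Zz_uminus[simp]: "in_Zz n (- f) \<longleftrightarrow> in_Zz n f"
  unfolding in_Zz_def by simp
lemma in_Zz_diff[simp]: "in_Zz n f \<Longrightarrow> in_Zz n g \<Longrightarrow> in_Zz n (f - g)"
  using in_Zz_add[of n f "- g"] by simp
lemma keys_nat_add: "Poly_Mapping.keys ((a::nat\<Rightarrow>\<^sub>0nat) + b) = Poly_Mapping.keys a \<union> Poly_Mapping.keys b"
  by (auto simp: in_keys_iff Poly_Mapping.lookup_add)
lemma in_Zz_mult[simp]: "in_Zz n f \<Longrightarrow> in_Zz n g \<Longrightarrow> in_Zz n (f * g)"
  unfolding in_Zz_def using keys_mult[of f g] by (fastforce simp: keys_nat_add)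
lemma in_Zz_sum[simp]: "(\<And>x. x \<in> A \<Longrightarrow> in_Zz n (f x)) \<Longrightarrow> in_Zz n (\<Sum>x\<in>A. f x)"
  by (induction A rule: infinite_finite_induct) auto
lemma in_Zz_prod[simp]: "(\<And>x. x \<in> A \<Longrightarrow> in_Zz n (f x)) \<Longrightarrow> in_Zz n (\<Prod>x\<in>A. f x)"
  by (induction A rule: infinite_finite_induct) auto
lemma in_Zz_power[simp]: "in_Zz n f \<Longrightarrow> in_Zz n (f ^ k)"
  by (induction k) auto
lemma in_Zz_Var[simp]: "i < n \<Longrightarrow> in_Zz n (Var i)"
  unfolding Var_def by (rule in_Zz_single) simp
lemma in_Zz_pdz[simp]: "in_Zz n f \<Longrightarrow> in_Zz n (pdz i f)"
  unfolding in_Zz_def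
proof
  fix m assume A: "\<forall>m\<in>Poly_Mapping.keys f. Poly_Mapping.keys m \<subseteq> {0..<n}"
    and "m \<in> Poly_Mapping.keys (pdz i f)"
  then have "m + e1 i \<in> Poly_Mapping.keys f" by (auto simp: in_keys_iff lookup_pdz)
  with A have "Poly_Mapping.keys (m + e1 i) \<subseteq> {0..<n}" by blast
  then show "Poly_Mapping.keys m \<subseteq> {0..<n}" by (simp add: keys_nat_add)
qed

definition dvdc :: "int \<Rightarrow> mpoly \<Rightarrow> bool" where
  "dvdc d f \<longleftrightarrow> (\<forall>k. d dvd Poly_Mapping.lookup f k)"
definition mdiv :: "int \<Rightarrow> mpoly \<Rightarrow> mpoly" where
  "mdiv d f = Poly_Mapping.map (\<lambda>a. a div d) f"

lemma lookup_mdiv: "Poly_Mapping.lookup (mdiv d f) k = Poly_Mapping.lookup f k div d"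
  by (simp add: mdiv_def Poly_Mapping.map.rep_eq when_def)
lemma dvdc_eq: "dvdc d f \<Longrightarrow> f = of_int d * mdiv d f"
  by (rule poly_mapping_eqI) (simp add: lookup_ofint_mult lookup_mdiv dvdc_def)
lemma in_Zz_mdiv: "in_Zz n f \<Longrightarrow> in_Zz n (mdiv d f)"
  unfolding in_Zz_def by (auto simp: in_keys_iff lookup_mdiv)
lemma dvdc_ofint_mult: "dvdc d (of_int d * h)"
  by (simp add: dvdc_def lookup_ofint_mult)
lemma dvdc_iff: "dvdc d f \<longleftrightarrow> (\<exists>h. f = of_int d * h)"
  using dvdc_eq dvdc_ofint_mult by metis

abbreviation qc where "qc n p r f \<equiv> quasi_const n p r f"

lemma qc_of_int[simp]: "quasi_const n p r (of_int d)"
  unfolding quasi_const_def by (auto intro!: exI[of _ 0])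
lemma qc_0[simp]: "quasi_const n p r 0" using qc_of_int[of n p r 0] by simp
lemma qc_1[simp]: "quasi_const n p r 1" using qc_of_int[of n p r 1] by simp
lemma qc_in_Zz: "quasi_const n p r f \<Longrightarrow> in_Zz n f" by (simp add: quasi_const_def)

lemma qc_add[simp]: "quasi_const n p r f \<Longrightarrow> quasi_const n p r g \<Longrightarrow> quasi_const n p r (f + g)"
  unfolding quasi_const_def
proof (intro conjI allI impI)
  fix i assume A: "in_Zz n f \<and> (\<forall>i<n. \<exists>h. in_Zz n h \<and> pdz i f = of_int (int p ^ r) * h)"
    "in_Zz n g \<and> (\<forall>i<n. \<exists>h. in_Zz n h \<and> pdz i g = of_int (int p ^ r) * h)" "i < n"
  then obtain h1 h2 where "in_Zz n h1" "pdz i f = of_int (int p ^ r) * h1" "in_Zz n h2" "pdz i g = of_int (int p ^ r) * h2"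
    by blast
  then show "\<exists>h. in_Zz n h \<and> pdz i (f + g) = of_int (int p ^ r) * h"
    by (intro exI[of _ "h1 + h2"]) (simp add: pdz_add algebra_simps)
qed auto

lemma qc_mult[simp]: "quasi_const n p r f \<Longrightarrow> quasi_const n p r g \<Longrightarrow> quasi_const n p r (f * g)"
  unfolding quasi_const_def
proof (intro conjI allI impI)
  fix i assume A: "in_Zz n f \<and> (\<forall>i<n. \<exists>h. in_Zz n h \<and> pdz i f = of_int (int p ^ r) * h)"
    "in_Zz n g \<and> (\<forall>i<n. \<exists>h. in_Zz n h \<and> pdz i g = of_int (int p ^ r) * h)" "i < n"
  then obtain h1 h2 where "in_Zz n h1" "pdz i f = of_int (int p ^ r) * h1" "in_Zz n h2" "pdz i g = of_int (int p ^ r) * h2"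
    by blast
  with A show "\<exists>h. in_Zz n h \<and> pdz i (f * g) = of_int (int p ^ r) * h"
    by (intro exI[of _ "h1 * g + f * h2"]) (simp add: pdz_mult algebra_simps)
qed auto

lemma qc_uminus[simp]: "quasi_const n p r f \<Longrightarrow> quasi_const n p r (- f)"
  using qc_mult[OF qc_of_int[of n p r "-1"], of f] by simp
lemma qc_diff[simp]: "quasi_const n p r f \<Longrightarrow> quasi_const n p r g \<Longrightarrow> quasi_const n p r (f - g)"
  using qc_add[of n p r f "- g"] by simp
lemma qc_sum[simp]: "(\<And>x. x \<in> A \<Longrightarrow> quasi_const n p r (f x)) \<Longrightarrow> quasi_const n p r (\<Sum>x\<in>A. f x)"
  by (induction A rule: infinite_finite_induct) auto

lemma qc_mono: "quasi_const n p r f \<Longrightarrow> k \<le> r \<Longrightarrow> quasi_const n p k f"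
  unfolding quasi_const_def
proof (intro conjI allI impI)
  fix i assume A: "in_Zz n f \<and> (\<forall>i<n. \<exists>h. in_Zz n h \<and> pdz i f = of_int (int p ^ r) * h)" "k \<le> r" "i < n"
  then obtain h1 where "in_Zz n h1" "pdz i f = of_int (int p ^ r) * h1" by blast
  moreover have "(of_int (int p ^ r) :: mpoly) = of_int (int p ^ k) * of_int (int p ^ (r - k))"
    using A(2) by (simp flip: power_add)
  ultimately show "\<exists>h. in_Zz n h \<and> pdz i f = of_int (int p ^ k) * h"
    by (intro exI[of _ "of_int (int p ^ (r - k)) * h1"]) simp
qed auto

lemma pdz_ofnat_pow[simp]: "pdz i (of_nat p ^ m) = 0"
  using pdz_of_nat[of i "p ^ m"] by (simp del: pdz_of_nat)

lemma qc_lift: "quasi_const n p k f \<Longrightarrow> k \<le> r \<Longrightarrow> quasi_const n p r (of_int (int p ^ (r - k)) * f)"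
  unfolding quasi_const_def
proof (intro conjI allI impI)
  fix i assume A: "in_Zz n f \<and> (\<forall>i<n. \<exists>h. in_Zz n h \<and> pdz i f = of_int (int p ^ k) * h)" "k \<le> r" "i < n"
  then obtain h1 where "in_Zz n h1" "pdz i f = of_int (int p ^ k) * h1" by blast
  moreover have "(of_int (int p ^ r) :: mpoly) = of_int (int p ^ (r - k)) * of_int (int p ^ k)"
    using A(2) by (simp flip: power_add)
  ultimately show "\<exists>h. in_Zz n h \<and> pdz i (of_int (int p ^ (r - k)) * f) = of_int (int p ^ r) * h"
    by (intro exI[of _ "h1"]) (simp add: pdz_mult)
qed (auto simp del: of_int_power)

lemma qc_zero_iff: "quasi_const n p 0 f \<longleftrightarrow> in_Zz n f"
  unfolding quasi_const_def by auto

lemma mp_cancel: assumes "(d::int) \<noteq> 0" "of_int d * f = of_int d * (g::mpoly)" shows "f = g"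
proof (rule poly_mapping_eqI)
  fix k
  from assms have "Poly_Mapping.lookup (of_int d * f) k = Poly_Mapping.lookup (of_int d * g) k" by simp
  with \<open>d \<noteq> 0\<close> show "Poly_Mapping.lookup f k = Poly_Mapping.lookup g k" by (simp add: lookup_ofint_mult)
qed

lemma qc_div:
  assumes "quasi_const n p r (of_int (int p ^ (r - k)) * f)" "in_Zz n f" "k \<le> r" "p > 0"
  shows "quasi_const n p k f"
  unfolding quasi_const_def
proof (intro conjI allI impI)
  fix i assume "i < n"
  with assms(1) obtain h1 where h1: "in_Zz n h1" "pdz i (of_int (int p ^ (r - k)) * f) = of_int (int p ^ r) * h1"
    unfolding quasi_const_def by blast
  have "(of_int (int p ^ r) :: mpoly) = of_int (int p ^ (r - k)) * of_int (int p ^ k)"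
    using assms(3) by (simp flip: power_add)
  with h1 have "of_int (int p ^ (r - k)) * pdz i f = of_int (int p ^ (r - k)) * (of_int (int p ^ k) * h1)"
    by (simp add: pdz_ofint_mult mult.assoc del: of_int_power)
  then have "pdz i f = of_int (int p ^ k) * h1"
    by (rule mp_cancel[rotated]) (use assms(4) in simp)
  with h1 show "\<exists>h. in_Zz n h \<and> pdz i f = of_int (int p ^ k) * h" by blast
qed (rule assms(2))



definition ZP :: "nat \<Rightarrow> mpoly poly \<Rightarrow> bool" where
  "ZP n P \<longleftrightarrow> (\<forall>k. in_Zz n (coeff P k))"

lemma ZP_0[simp]: "ZP n 0" by (simp add: ZP_def)
lemma ZP_pCons[simp]: "in_Zz n a \<Longrightarrow> ZP n P \<Longrightarrow> ZP n (pCons a P)"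
  by (auto simp: ZP_def coeff_pCons split: nat.splits)
lemma ZP_1[simp]: "ZP n 1" by (simp add: one_pCons)
lemma ZP_add[simp]: "ZP n P \<Longrightarrow> ZP n Q \<Longrightarrow> ZP n (P + Q)" by (simp add: ZP_def)
lemma ZP_mult[simp]: "ZP n P \<Longrightarrow> ZP n Q \<Longrightarrow> ZP n (P * Q)" by (simp add: ZP_def coeff_mult)
lemma ZP_power[simp]: "ZP n P \<Longrightarrow> ZP n (P ^ k)" by (induction k) auto
lemma ZP_prod[simp]: "(\<And>x. x \<in> A \<Longrightarrow> ZP n (f x)) \<Longrightarrow> ZP n (\<Prod>x\<in>A. f x)"
  by (induction A rule: infinite_finite_induct) auto
lemma ZP_smult[simp]: "in_Zz n c \<Longrightarrow> ZP n P \<Longrightarrow> ZP n (smult c P)" by (simp add: ZP_def)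
lemma ZP_pderiv[simp]: "ZP n P \<Longrightarrow> ZP n (pderiv P)" by (simp add: ZP_def coeff_pderiv)
lemma ZP_lin[simp]: "i < n \<Longrightarrow> ZP n [:- Var i, 1:]" by simp

definition Dz :: "nat \<Rightarrow> mpoly poly \<Rightarrow> mpoly poly" where
  "Dz i P = map_poly (pdz i) P"

lemma coeff_Dz: "coeff (Dz i P) k = pdz i (coeff P k)"
  by (simp add: Dz_def coeff_map_poly)
lemma ZP_Dz[simp]: "ZP n P \<Longrightarrow> ZP n (Dz i P)" by (simp add: ZP_def coeff_Dz)
lemma Dz_add: "Dz i (P + Q) = Dz i P + Dz i Q"
  by (rule poly_eqI) (simp add: coeff_Dz pdz_add)
lemma Dz_one[simp]: "Dz i 1 = 0"
  by (rule poly_eqI) (simp add: coeff_Dz coeff_1 del: One_nat_def)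
lemma Dz_mult: "Dz i (P * Q) = Dz i P * Q + P * Dz i Q"
  by (rule poly_eqI) (simp add: coeff_Dz coeff_mult pdz_sum pdz_mult sum.distrib)
lemma Dz_smult: "Dz i (smult (of_nat c) P) = smult (of_nat c) (Dz i P)"
  by (rule poly_eqI) (simp add: coeff_Dz pdz_mult)
lemma Dz_power: "Dz i (P ^ Suc N) = smult (of_nat (Suc N)) (P ^ N * Dz i P)"
proof (induction N)
  case 0 then show ?case by (simp add: Dz_mult)
next
  case (Suc N)
  have "Dz i (P ^ Suc (Suc N)) = Dz i P * P ^ Suc N + P * Dz i (P ^ Suc N)"
    by (simp only: power_Suc[of P "Suc N"] Dz_mult)
  also have "\<dots> = P ^ Suc N * Dz i P + smult (of_nat (Suc N)) (P ^ Suc N * Dz i P)"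
    unfolding Suc by (simp only: mult_smult_right power_Suc ac_simps)
  also have "\<dots> = smult (1 + of_nat (Suc N)) (P ^ Suc N * Dz i P)"
    by (simp only: smult_add_left smult_1_left)
  also have "\<dots> = smult (of_nat (Suc (Suc N))) (P ^ Suc N * Dz i P)"
    by (simp only: of_nat_Suc[of "Suc N"] add.commute)
  finally show ?case .
qed

lemma power_coeff_qc:
  assumes "ZP n G" "p > 0"
  shows "quasi_const n p r (coeff (G ^ (p ^ r)) m)"
  unfolding quasi_const_def
proof (intro conjI allI impI)
  show "in_Zz n (coeff (G ^ p ^ r) m)" using assms by (simp add: ZP_def[symmetric] ZP_power[unfolded ZP_def])
next
  fix i assume "i < n"
  obtain N where N: "p ^ r = Suc N" using assms(2) by (metis gr0_implies_Suc zero_less_power)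
  have "pdz i (coeff (G ^ (p ^ r)) m) = coeff (Dz i (G ^ Suc N)) m" by (simp add: coeff_Dz N)
  also have "\<dots> = of_nat (Suc N) * coeff (G ^ N * Dz i G) m" by (simp only: Dz_power coeff_smult)
  also have "\<dots> = of_int (int p ^ r) * coeff (G ^ N * Dz i G) m"
    by (metis N of_int_of_nat_eq of_nat_power)
  finally show "\<exists>h. in_Zz n h \<and> pdz i (coeff (G ^ p ^ r) m) = of_int (int p ^ r) * h"
    using assms by (intro exI[of _ "coeff (G ^ N * Dz i G) m"]) (simp add: ZP_def[symmetric] ZP_mult[unfolded ZP_def])
qed

lemma int_dvd_cancel_coprime:
  assumes "prime p" "k \<le> r" "\<not> p dvd u" "int (p ^ k * u) * a = int (p ^ r) * b"
  shows "int p ^ (r - k) dvd a"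
proof -
  have "int p ^ k * (int u * a) = int p ^ k * (int p ^ (r - k) * b)"
    using assms(2,4) by (simp add: algebra_simps flip: power_add)
  then have "int u * a = int p ^ (r - k) * b" using assms(1) by (simp add: prime_gt_0_nat)
  then have d: "int p ^ (r - k) dvd int u * a" by simp
  have "coprime (int p) (int u)" using assms(1,3)
    by (simp add: prime_imp_coprime)
  then have "coprime (int p ^ (r - k)) (int u)" by simp
  with d show ?thesis by (simp add: coprime_dvd_mult_right_iff)
qed

lemma power_coeff_dvd:
  assumes "ZP n G" "prime p" "k \<le> r" "m = p ^ k * u" "\<not> p dvd u"
  shows "dvdc (int p ^ (r - k)) (coeff (G ^ (p ^ r)) m)"
proof -
  have "u \<noteq> 0" using assms(5) by (metis dvd_0_right)
  moreover have "p ^ k \<noteq> 0" using assms(2) by (simp add: prime_gt_0_nat)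
  ultimately have "m \<noteq> 0" using assms(4) by simp
  then obtain m' where m': "m = Suc m'" using not0_implies_Suc by blast
  have "of_nat m * coeff (G ^ (p ^ r)) m = coeff (pderiv (G ^ (p ^ r))) m'"
    by (simp add: coeff_pderiv m')
  also have "\<dots> = of_nat (p ^ r) * coeff (G ^ (p ^ r - 1) * pderiv G) m'"
    by (simp add: pderiv_power)
  finally have eq: "of_nat m * coeff (G ^ (p ^ r)) m = of_nat (p ^ r) * coeff (G ^ (p ^ r - 1) * pderiv G) m'" .
  show ?thesis unfolding dvdc_def
  proof
    fix x
    from arg_cong[OF eq, of "\<lambda>f. Poly_Mapping.lookup f x"]
    have "int m * Poly_Mapping.lookup (coeff (G ^ (p ^ r)) m) x = int (p ^ r) * Poly_Mapping.lookup (coeff (G ^ (p ^ r - 1) * pderiv G) m') x"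
      by (simp only: lookup_ofnat_mult)
    then show "int p ^ (r - k) dvd Poly_Mapping.lookup (coeff (G ^ p ^ r) m) x"
      using int_dvd_cancel_coprime[OF assms(2,3,5)] assms(4) by blast
  qed
qed

lemma power_coeff_split:
  assumes "ZP n G" "prime p" "k \<le> r" "m = p ^ k * u" "\<not> p dvd u"
  shows "\<exists>q'. coeff (G ^ (p ^ r)) m = of_int (int p ^ (r - k)) * q' \<and> quasi_const n p k q'"
proof -
  let ?q = "coeff (G ^ (p ^ r)) m"
  have d: "?q = of_int (int p ^ (r - k)) * mdiv (int p ^ (r - k)) ?q"
    using dvdc_eq[OF power_coeff_dvd[OF assms]] .
  have "in_Zz n ?q" using assms(1) by (simp add: ZP_def[symmetric] ZP_power[unfolded ZP_def])
  then have z: "in_Zz n (mdiv (int p ^ (r - k)) ?q)" by (rule in_Zz_mdiv)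
  have "quasi_const n p r ?q" using power_coeff_qc assms(1,2) prime_gt_0_nat by blast
  with d have "quasi_const n p r (of_int (int p ^ (r - k)) * mdiv (int p ^ (r - k)) ?q)" by simp
  then have "quasi_const n p k (mdiv (int p ^ (r - k)) ?q)"
    using qc_div z assms(3) assms(2) prime_gt_0_nat by blast
  with d show ?thesis by blast
qed



definition SE :: "nat \<Rightarrow> (nat \<Rightarrow> nat \<Rightarrow> nat \<Rightarrow> mpoly) \<Rightarrow> (nat \<Rightarrow> nat \<Rightarrow> mpoly) \<Rightarrow> nat \<Rightarrow> nat \<Rightarrow> nat \<Rightarrow> mpoly" where
  "SE p W c s t j = (\<Sum>r\<in>{1..t}. \<Sum>l\<in>{l. c r l \<noteq> 0}. c r l * of_int (int p ^ (s - r)) * W r l j)"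

definition SP :: "nat \<Rightarrow> nat \<Rightarrow> nat set \<Rightarrow> (nat \<Rightarrow> nat \<Rightarrow> nat \<Rightarrow> mpoly) \<Rightarrow> nat \<Rightarrow> nat \<Rightarrow> (nat \<Rightarrow> mpoly) \<Rightarrow> bool" where
  "SP n p A W s t V \<longleftrightarrow> (\<exists>c. (\<forall>r\<in>{1..t}. finite {l. c r l \<noteq> 0} \<and> (\<forall>l\<in>A. quasi_const n p r (c r l)) \<and> (\<forall>l. l \<notin> A \<longrightarrow> c r l = 0))
      \<and> (\<forall>j. \<exists>h. V j = SE p W c s t j + of_int (int p ^ s) * h))"

definition cok where
  "cok n p A t c \<longleftrightarrow> (\<forall>r\<in>{1..t}. finite {l. c r l \<noteq> 0} \<and> (\<forall>l\<in>A. quasi_const n p r (c r l)) \<and> (\<forall>l. l \<notin> A \<longrightarrow> c r l = 0))"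

lemma SP_alt: "SP n p A W s t V \<longleftrightarrow> (\<exists>c. cok n p A t c \<and> (\<forall>j. \<exists>h. V j = SE p W c s t j + of_int (int p ^ s) * h))"
  unfolding SP_def cok_def ..

lemma sum_supp:
  assumes "finite S" "{l. c l \<noteq> (0::mpoly)} \<subseteq> S"
  shows "(\<Sum>l\<in>{l. c l \<noteq> 0}. c l * f l) = (\<Sum>l\<in>S. c l * f l)"
  by (rule sum.mono_neutral_left) (use assms in auto)

lemma SE_sets:
  assumes "\<And>r. r \<in> {1..t} \<Longrightarrow> finite (S r) \<and> {l. c r l \<noteq> 0} \<subseteq> S r"
  shows "SE p W c s t j = (\<Sum>r\<in>{1..t}. \<Sum>l\<in>S r. c r l * (of_int (int p ^ (s - r)) * W r l j))"
  unfolding SE_def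
proof (rule sum.cong[OF refl])
  fix r assume "r \<in> {1..t}"
  then show "(\<Sum>l\<in>{l. c r l \<noteq> 0}. c r l * of_int (int p ^ (s - r)) * W r l j) =
         (\<Sum>l\<in>S r. c r l * (of_int (int p ^ (s - r)) * W r l j))"
    using sum_supp[of "S r" "c r" "\<lambda>l. of_int (int p ^ (s - r)) * W r l j"] assms
    by (simp add: mult.assoc)
qed

lemma SP_zero: "SP n p A W s t (\<lambda>j. 0)"
  unfolding SP_def SE_def by (intro exI[of _ "\<lambda>_ _. 0"]) (auto intro!: exI[of _ 0])

lemma SP_triv: "SP n p A W 0 t V"
  unfolding SP_def SE_def by (intro exI[of _ "\<lambda>_ _. 0"]) (auto intro!: exI[of _ "V _"])

lemma SP_add:
  assumes "SP n p A W s t V" "SP n p A W s t V'"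
  shows "SP n p A W s t (\<lambda>j. V j + V' j)"
proof -
  obtain c where c: "cok n p A t c" "\<forall>j. \<exists>h. V j = SE p W c s t j + of_int (int p ^ s) * h"
    using assms(1) unfolding SP_alt by blast
  obtain c' where c': "cok n p A t c'" "\<forall>j. \<exists>h. V' j = SE p W c' s t j + of_int (int p ^ s) * h"
    using assms(2) unfolding SP_alt by blast
  define d where "d = (\<lambda>r l. c r l + c' r l)"
  define S where "S = (\<lambda>r. {l. c r l \<noteq> 0} \<union> {l. c' r l \<noteq> 0})"
  have S: "\<And>r. r \<in> {1..t} \<Longrightarrow> finite (S r)" using c(1) c'(1) unfolding cok_def S_def by auto
  have "cok n p A t d" unfolding cok_def
  proof (intro ballI conjI allI impI)
    fix r assume r: "r \<in> {1..t}"
    show "finite {l. d r l \<noteq> 0}" by (rule finite_subset[OF _ S[OF r]]) (auto simp: S_def d_def)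
    show "\<And>l. l \<in> A \<Longrightarrow> quasi_const n p r (d r l)" using c(1) c'(1) r unfolding cok_def d_def by auto
    show "\<And>l. l \<notin> A \<Longrightarrow> d r l = 0" using c(1) c'(1) r unfolding cok_def d_def by auto
  qed
  moreover have "\<forall>j. \<exists>h. V j + V' j = SE p W d s t j + of_int (int p ^ s) * h"
  proof
    fix j
    obtain h where h: "V j = SE p W c s t j + of_int (int p ^ s) * h" using c(2) by blast
    obtain h' where h': "V' j = SE p W c' s t j + of_int (int p ^ s) * h'" using c'(2) by blast
    have e1: "SE p W c s t j = (\<Sum>r\<in>{1..t}. \<Sum>l\<in>S r. c r l * (of_int (int p ^ (s - r)) * W r l j))"
      by (rule SE_sets) (use S in \<open>auto simp: S_def\<close>)
    have e2: "SE p W c' s t j = (\<Sum>r\<in>{1..t}. \<Sum>l\<in>S r. c' r l * (of_int (int p ^ (s - r)) * W r l j))"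
      by (rule SE_sets) (use S in \<open>auto simp: S_def\<close>)
    have e3: "SE p W d s t j = (\<Sum>r\<in>{1..t}. \<Sum>l\<in>S r. d r l * (of_int (int p ^ (s - r)) * W r l j))"
      by (rule SE_sets) (use S in \<open>auto simp: S_def d_def\<close>)
    have "SE p W d s t j = SE p W c s t j + SE p W c' s t j"
      unfolding e1 e2 e3 by (simp add: d_def distrib_right sum.distrib)
    then show "\<exists>h. V j + V' j = SE p W d s t j + of_int (int p ^ s) * h"
      using h h' by (intro exI[of _ "h + h'"]) (simp add: algebra_simps)
  qed
  ultimately show ?thesis unfolding SP_alt by blast
qed

lemma SP_cong:
  assumes "SP n p A W s t V'" "\<And>j. \<exists>h. V j = V' j + of_int (int p ^ s) * h"
  shows "SP n p A W s t V"
proof -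
  obtain c where c: "cok n p A t c" "\<forall>j. \<exists>h. V' j = SE p W c s t j + of_int (int p ^ s) * h"
    using assms(1) unfolding SP_alt by blast
  have "\<forall>j. \<exists>h. V j = SE p W c s t j + of_int (int p ^ s) * h"
  proof
    fix j
    obtain h where "V' j = SE p W c s t j + of_int (int p ^ s) * h" using c(2) by blast
    moreover obtain h' where "V j = V' j + of_int (int p ^ s) * h'" using assms(2) by blast
    ultimately show "\<exists>h. V j = SE p W c s t j + of_int (int p ^ s) * h"
      by (intro exI[of _ "h + h'"]) (simp add: algebra_simps)
  qed
  with c(1) show ?thesis unfolding SP_alt by blast
qed

lemma SP_eq: "SP n p A W s t V' \<Longrightarrow> (\<And>j. V j = V' j) \<Longrightarrow> SP n p A W s t V"
  by (rule SP_cong) (auto intro!: exI[of _ 0])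

lemma SP_scal:
  assumes "SP n p A W s t V" "quasi_const n p t q"
  shows "SP n p A W s t (\<lambda>j. q * V j)"
proof -
  obtain c where c: "cok n p A t c" "\<forall>j. \<exists>h. V j = SE p W c s t j + of_int (int p ^ s) * h"
    using assms(1) unfolding SP_alt by blast
  define d where "d = (\<lambda>r l. q * c r l)"
  have fin: "\<And>r. r \<in> {1..t} \<Longrightarrow> finite {l. c r l \<noteq> 0}" using c(1) unfolding cok_def by auto
  have "cok n p A t d" using c(1) assms(2) unfolding cok_def d_def
    by (auto intro!: finite_subset[OF _ fin] qc_mult qc_mono[OF assms(2)])
  moreover have "\<forall>j. \<exists>h. q * V j = SE p W d s t j + of_int (int p ^ s) * h"
  proof
    fix j
    obtain h where h: "V j = SE p W c s t j + of_int (int p ^ s) * h" using c(2) by blast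
    have e1: "SE p W c s t j = (\<Sum>r\<in>{1..t}. \<Sum>l\<in>{l. c r l \<noteq> 0}. c r l * (of_int (int p ^ (s - r)) * W r l j))"
      by (rule SE_sets) (use fin in auto)
    have e3: "SE p W d s t j = (\<Sum>r\<in>{1..t}. \<Sum>l\<in>{l. c r l \<noteq> 0}. d r l * (of_int (int p ^ (s - r)) * W r l j))"
      by (rule SE_sets) (use fin in \<open>auto simp: d_def\<close>)
    have "SE p W d s t j = q * SE p W c s t j"
      unfolding e1 e3 by (simp add: d_def sum_distrib_left mult.assoc)
    then show "\<exists>h. q * V j = SE p W d s t j + of_int (int p ^ s) * h"
      using h by (intro exI[of _ "q * h"]) (simp add: algebra_simps)
  qed
  ultimately show ?thesis unfolding SP_alt by blast
qed

lemma SP_sum: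
  assumes "finite I" "\<And>i. i \<in> I \<Longrightarrow> SP n p A W s t (V i)"
  shows "SP n p A W s t (\<lambda>j. \<Sum>i\<in>I. V i j)"
  using assms
proof (induction I rule: finite_induct)
  case empty then show ?case by (simp add: SP_zero)
next
  case (insert x F)
  then have "SP n p A W s t (\<lambda>j. V x j + (\<Sum>i\<in>F. V i j))" by (intro SP_add) auto
  then show ?case by (rule SP_eq) (use insert in simp)
qed

lemma SP_mono:
  assumes "SP n p A W s t V" "t \<le> t'"
  shows "SP n p A W s t' V"
proof -
  obtain c where c: "cok n p A t c" "\<forall>j. \<exists>h. V j = SE p W c s t j + of_int (int p ^ s) * h"
    using assms(1) unfolding SP_alt by blast
  define d where "d = (\<lambda>r l. if r \<le> t then c r l else 0)"
  have "cok n p A t' d" using c(1) unfolding cok_def d_def by auto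
  moreover have "SE p W d s t' j = SE p W c s t j" for j
  proof -
    have "SE p W d s t' j = (\<Sum>r\<in>{1..t}. \<Sum>l\<in>{l. d r l \<noteq> 0}. d r l * of_int (int p ^ (s - r)) * W r l j)"
      unfolding SE_def by (rule sum.mono_neutral_right) (use assms(2) in \<open>auto simp: d_def\<close>)
    also have "\<dots> = SE p W c s t j" unfolding SE_def by (rule sum.cong) (auto simp: d_def)
    finally show ?thesis .
  qed
  ultimately show ?thesis using c(2) unfolding SP_alt by metis
qed

lemma SP_lift:
  assumes "SP n p A W r t V" "t \<le> r" "r \<le> s"
  shows "SP n p A W s t (\<lambda>j. of_int (int p ^ (s - r)) * V j)"
proof -
  obtain c where c: "cok n p A t c" "\<forall>j. \<exists>h. V j = SE p W c r t j + of_int (int p ^ r) * h"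
    using assms(1) unfolding SP_alt by blast
  have "\<forall>j. \<exists>h. of_int (int p ^ (s - r)) * V j = SE p W c s t j + of_int (int p ^ s) * h"
  proof
    fix j
    obtain h where h: "V j = SE p W c r t j + of_int (int p ^ r) * h" using c(2) by blast
    have "of_int (int p ^ (s - r)) * SE p W c r t j = SE p W c s t j"
      unfolding SE_def sum_distrib_left
    proof (intro sum.cong refl)
      fix k l assume "k \<in> {1..t}"
      then have "int p ^ (s - r) * int p ^ (r - k) = int p ^ (s - k)" using assms(2,3)
        by (simp flip: power_add)
      then have "(of_int (int p ^ (s - r)) :: mpoly) * of_int (int p ^ (r - k)) = of_int (int p ^ (s - k))"
        by (metis of_int_mult)
      then show "of_int (int p ^ (s - r)) * (c k l * of_int (int p ^ (r - k)) * W k l j) = c k l * of_int (int p ^ (s - k)) * W k l j"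
        by (metis (no_types, lifting) mult.assoc mult.left_commute)
    qed
    moreover have "(of_int (int p ^ (s - r)) :: mpoly) * of_int (int p ^ r) = of_int (int p ^ s)"
      using assms(3) by (metis le_add_diff_inverse2 of_int_mult power_add)
    ultimately show "\<exists>h. of_int (int p ^ (s - r)) * V j = SE p W c s t j + of_int (int p ^ s) * h"
      using h by (intro exI[of _ h]) (simp add: distrib_left mult.assoc[symmetric])
  qed
  with c(1) show ?thesis unfolding SP_alt by blast
qed

lemma SP_gen:
  assumes "1 \<le> r" "l0 \<in> A"
  shows "SP n p A W r r (\<lambda>j. W r l0 j)"
proof -
  define c where "c = (\<lambda>r' l. if r' = r \<and> l = l0 then (1::mpoly) else 0)"
  have "cok n p A r c" using assms unfolding cok_def c_def by auto
  moreover have "SE p W c r r j = W r l0 j" for j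
  proof -
    have "SE p W c r r j = (\<Sum>r'\<in>{1..r}. if r' = r then W r l0 j else 0)"
      unfolding SE_def
    proof (rule sum.cong[OF refl])
      fix r' assume "r' \<in> {1..r}"
      show "(\<Sum>l\<in>{l. c r' l \<noteq> 0}. c r' l * of_int (int p ^ (r - r')) * W r' l j) = (if r' = r then W r l0 j else 0)"
      proof (cases "r' = r")
        case True
        then have "{l. c r' l \<noteq> 0} = {l0}" by (auto simp: c_def)
        with True show ?thesis by (simp add: c_def)
      next
        case False
        then have "{l. c r' l \<noteq> 0} = {}" by (auto simp: c_def)
        with False show ?thesis by simp
      qed
    qed
    also have "\<dots> = W r l0 j" using assms(1) by simp
    finally show ?thesis .
  qed
  ultimately show ?thesis unfolding SP_alt by (intro exI[of _ c]) (auto intro!: exI[of _ 0])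
qed

lemma SP_transfer:
  assumes "SP n p A W s t V" "t \<le> s"
    and "\<And>r l. r \<in> {1..t} \<Longrightarrow> l \<in> A \<Longrightarrow> SP n p A' W' r r (W r l)"
  shows "SP n p A' W' s t V"
proof -
  obtain c where c: "cok n p A t c" "\<forall>j. \<exists>h. V j = SE p W c s t j + of_int (int p ^ s) * h"
    using assms(1) unfolding SP_alt by blast
  have fin: "\<And>r. r \<in> {1..t} \<Longrightarrow> finite {l. c r l \<noteq> 0}" using c(1) unfolding cok_def by auto
  have "SP n p A' W' s t (\<lambda>j. SE p W c s t j)"
    unfolding SE_def
  proof (intro SP_sum)
    fix r l assume r: "r \<in> {1..t}" and l: "l \<in> {l. c r l \<noteq> 0}"
    then have lA: "l \<in> A" using c(1) unfolding cok_def by auto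
    have q: "quasi_const n p r (c r l)" using c(1) r lA unfolding cok_def by auto
    have "SP n p A' W' r r (\<lambda>j. c r l * W r l j)" using SP_scal[OF assms(3)[OF r lA] q] .
    then have "SP n p A' W' s r (\<lambda>j. of_int (int p ^ (s - r)) * (c r l * W r l j))"
      by (rule SP_lift) (use r assms(2) in auto)
    then have "SP n p A' W' s t (\<lambda>j. of_int (int p ^ (s - r)) * (c r l * W r l j))"
      by (rule SP_mono) (use r in auto)
    then show "SP n p A' W' s t (\<lambda>j. c r l * of_int (int p ^ (s - r)) * W r l j)"
      by (rule SP_eq) (simp add: ac_simps)
  qed (use fin in auto)
  then show ?thesis
    by (rule SP_cong) (use c(2) in auto)
qed



definition Mv :: "nat \<Rightarrow> nat \<Rightarrow> nat" where "Mv p r = (p ^ r - 1) div 2"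

lemma Mv_eq: "odd p \<Longrightarrow> 2 * Mv p r + 1 = p ^ r"
  unfolding Mv_def by (simp add: odd_pos)

lemma Mv_split:
  assumes "odd p" "k \<le> r"
  shows "Mv p r = Mv p k + p ^ k * Mv p (r - k)"
proof -
  have a: "2 * Mv p r + 1 = p ^ r" "2 * Mv p k + 1 = p ^ k" "2 * Mv p (r - k) + 1 = p ^ (r - k)"
    using Mv_eq[OF assms(1)] by auto
  have "p ^ r = p ^ k * p ^ (r - k)" using assms(2) by (simp flip: power_add)
  then have "2 * Mv p r + 1 = (2 * Mv p k + 1) * (2 * Mv p (r - k) + 1)" using a by simp
  then have "2 * Mv p r = 2 * (Mv p k + (2 * Mv p k + 1) * Mv p (r - k))" by (simp add: algebra_simps)
  then have e: "Mv p r = Mv p k + (2 * Mv p k + 1) * Mv p (r - k)" by (metis nat_mult_eq_cancel1 zero_less_numeral)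
  then show ?thesis using a(2) by metis
qed

lemma Mv_pos: "odd p \<Longrightarrow> p > 1 \<Longrightarrow> r \<ge> 1 \<Longrightarrow> Mv p r \<ge> 1"
proof -
  assume as: "odd p" "p > 1" "r \<ge> 1"
  then have "p ^ r \<ge> p" by (simp add: self_le_power)
  moreover have "p \<ge> 3" using as by presburger
  ultimately have "2 * Mv p r + 1 \<ge> 3" using Mv_eq[OF as(1), of r] by simp
  then show ?thesis by simp
qed

abbreviation X :: "nat \<Rightarrow> mpoly poly" where "X i \<equiv> [:- Var i, 1:]"

definition Gp :: "nat \<Rightarrow> (nat \<Rightarrow> nat) \<Rightarrow> mpoly poly" where
  "Gp n b = (\<Prod>i\<in>{0..<n}. X i ^ b i)"

lemma ZP_Gp: "ZP n (Gp n b)" unfolding Gp_def by (intro ZP_prod ZP_power) simp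

lemma Phi_quot_factor:
  assumes "\<And>i. i < n \<Longrightarrow> M i = Mv p r + p ^ r * b i" "j < n" "Mv p r \<ge> 1"
  shows "Phi_quot n M j = Phi_quot n (\<lambda>_. Mv p r) j * Gp n b ^ (p ^ r)"
proof -
  let ?m = "Mv p r" and ?N = "p ^ r"
  have jn: "j \<in> {0..<n}" using assms(2) by simp
  have "Gp n b ^ ?N = (\<Prod>i\<in>{0..<n}. X i ^ (b i * ?N))"
    unfolding Gp_def prod_power_distrib by (simp add: power_mult)
  also have "\<dots> = X j ^ (b j * ?N) * (\<Prod>i\<in>{0..<n} - {j}. X i ^ (b i * ?N))"
    using prod.remove[OF _ jn] by simp
  finally have G: "Gp n b ^ ?N = X j ^ (b j * ?N) * (\<Prod>i\<in>{0..<n} - {j}. X i ^ (b i * ?N))" .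
  have Mj: "M j - 1 = (?m - 1) + b j * ?N" using assms(1)[OF assms(2)] assms(3) by (simp add: mult.commute)
  have P: "(\<Prod>i\<in>{0..<n} - {j}. X i ^ M i) = (\<Prod>i\<in>{0..<n} - {j}. X i ^ ?m) * (\<Prod>i\<in>{0..<n} - {j}. X i ^ (b i * ?N))"
    by (simp add: prod.distrib[symmetric] assms(1) power_add mult.commute)
  show ?thesis
    unfolding Phi_quot_def G Mj P power_add by (simp add: ac_simps)
qed

lemma Ivec_decomp:
  assumes "\<And>i. i < n \<Longrightarrow> M i = Mv p r + p ^ r * b i" "Mv p r \<ge> 1"
  shows "Ivec n M k j = (\<Sum>m\<le>k. coeff (Gp n b ^ (p ^ r)) m * Ivec n (\<lambda>_. Mv p r) (k - m) j)"
proof (cases "j < n")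
  case True
  have "Ivec n M k j = coeff (Gp n b ^ (p ^ r) * Phi_quot n (\<lambda>_. Mv p r) j) k"
    unfolding Ivec_def using True Phi_quot_factor[OF assms(1) True assms(2)] by (simp add: mult.commute)
  also have "\<dots> = (\<Sum>m\<le>k. coeff (Gp n b ^ (p ^ r)) m * Ivec n (\<lambda>_. Mv p r) (k - m) j)"
    unfolding coeff_mult Ivec_def using True by simp
  finally show ?thesis .
qed (simp add: Ivec_def)

lemma degree_Phi_quot_std: "j < n \<Longrightarrow> degree (Phi_quot n (\<lambda>_. m) j) \<le> (m - 1) + (n - 1) * m"
proof -
  assume "j < n"
  have d1: "degree (X j ^ (m - 1)) \<le> m - 1" by (simp add: degree_linear_power)
  have "degree (\<Prod>i\<in>{0..<n} - {j}. X i ^ m) \<le> (\<Sum>i\<in>{0..<n} - {j}. degree (X i ^ m))"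
    using degree_prod_sum_le[of "{0..<n} - {j}" "\<lambda>i. X i ^ m"] by (simp add: o_def)
  also have "\<dots> = card ({0..<n} - {j}) * m" by (simp add: degree_linear_power)
  also have "\<dots> \<le> (n - 1) * m"
  proof -
    have "card ({0..<n} - {j}) \<le> n - 1"
      using \<open>j < n\<close> by (auto simp: card_Diff_singleton_if)
    then show ?thesis by simp
  qed
  finally have d2: "degree (\<Prod>i\<in>{0..<n} - {j}. X i ^ m) \<le> (n - 1) * m" .
  show ?thesis unfolding Phi_quot_def
    using degree_mult_le[of "X j ^ (m - 1)" "\<Prod>i\<in>{0..<n} - {j}. X i ^ m"] d1 d2 by linarith
qed

lemma Istd_zero:
  assumes "odd p" "p > 1" "r \<ge> 1" "l > g"
  shows "Istd (2*g+1) p r l j = 0"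
proof (cases "j < 2*g+1")
  case False then show ?thesis by (simp add: Istd_def Ivec_def)
next
  case True
  let ?m = "Mv p r"
  have m: "2 * ?m + 1 = p ^ r" by (rule Mv_eq[OF assms(1)])
  have m1: "?m \<ge> 1" by (rule Mv_pos[OF assms(1-3)])
  have "l * p ^ r \<ge> (g + 1) * p ^ r" using assms(4) by (intro mult_le_mono1) simp
  moreover have "(g + 1) * p ^ r = (g + 1) * (2 * ?m + 1)" using m by simp
  moreover have "(g + 1) * (2 * ?m + 1) = 2 * (g * ?m) + 2 * ?m + g + 1" by (simp add: algebra_simps)
  moreover have "(2*g+1 - 1) * ?m = 2 * (g * ?m)" by simp
  ultimately have "l * p ^ r - 1 > (?m - 1) + (2*g+1 - 1) * ?m" using m1 by linarith
  then have "degree (Phi_quot (2*g+1) (\<lambda>_. ?m) j) < l * p ^ r - 1"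
    using degree_Phi_quot_std[OF True, of ?m] by linarith
  then show ?thesis unfolding Istd_def Ivec_def Mv_def[symmetric] by (simp add: coeff_eq_0)
qed

lemma Gp_power_top:
  shows "coeff (Gp n b ^ N) (N * (\<Sum>i<n. b i)) = 1"
    and "m > N * (\<Sum>i<n. b i) \<Longrightarrow> coeff (Gp n b ^ N) m = 0"
proof -
  have eq: "Gp n b ^ N = (\<Prod>i\<in>{0..<n}. X i ^ (b i * N))"
    unfolding Gp_def prod_power_distrib by (simp add: power_mult)
  have nz: "X i ^ k \<noteq> 0" for i k by simp
  have deg: "degree (Gp n b ^ N) = N * (\<Sum>i<n. b i)"
    unfolding eq by (subst degree_prod_sum_eq) (auto simp: degree_linear_power nz sum_distrib_left atLeast0LessThan ac_simps)
  have lc: "lead_coeff (Gp n b ^ N) = 1"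
    unfolding eq lead_coeff_prod by (simp add: lead_coeff_power)
  show "coeff (Gp n b ^ N) (N * (\<Sum>i<n. b i)) = 1" using lc deg by simp
  show "m > N * (\<Sum>i<n. b i) \<Longrightarrow> coeff (Gp n b ^ N) m = 0" using deg by (simp add: coeff_eq_0)
qed



lemma val_split:
  assumes "prime (p::nat)" "(m::nat) > 0" "\<not> p ^ r dvd m"
  shows "\<exists>k u. k < r \<and> m = p ^ k * u \<and> \<not> p dvd u"
  using assms(2,3)
proof (induction m arbitrary: r rule: less_induct)
  case (less m)
  show ?case
  proof (cases "p dvd m")
    case False
    have "r \<noteq> 0" using less.prems(2) by (intro notI) simp
    with False show ?thesis by (intro exI[of _ 0] exI[of _ m]) auto
  next
    case True
    then obtain m' where m': "m = p * m'" by blast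
    have "r \<noteq> 0" using less.prems(2) by (intro notI) simp
    then obtain r' where r': "r = Suc r'" using not0_implies_Suc by blast
    have p1: "p > 1" using prime_gt_1_nat[OF assms(1)] by simp
    have "m' > 0" using less.prems(1) m' by simp
    moreover have "m' < m" using m' p1 \<open>m' > 0\<close> by simp
    moreover have "\<not> p ^ r' dvd m'" using less.prems(2) m' r' by (auto simp: mult_dvd_mono)
    ultimately obtain k u where "k < r'" "m' = p ^ k * u" "\<not> p dvd u" using less.IH by blast
    then show ?thesis using m' r' by (intro exI[of _ "Suc k"] exI[of _ u]) auto
  qed
qed

lemma Istd_Mv: "Istd n p r l j = Ivec n (\<lambda>_. Mv p r) (l * p ^ r - 1) j"
  by (simp add: Istd_def Mv_def)

lemma nonmult_term:
  assumes "prime p" "odd p" "r \<ge> 1" "L \<ge> 1" "m \<le> L * p ^ r - 1" "\<not> p ^ r dvd m"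
    and IH: "\<And>k l'. k < r \<Longrightarrow> l' \<ge> 1 \<Longrightarrow> SP n p A W k k (\<lambda>j. Ivec n (\<lambda>_. Mv p r) (l' * p ^ k - 1) j)"
  shows "SP n p A W r r (\<lambda>j. coeff (Gp n b ^ (p ^ r)) m * Ivec n (\<lambda>_. Mv p r) (L * p ^ r - 1 - m) j)"
proof -
  have p0: "p > 0" using assms(1) by (simp add: prime_gt_0_nat)
  have "m > 0" using assms(6) by (intro gr0I) simp
  then obtain k u where ku: "k < r" "m = p ^ k * u" "\<not> p dvd u" using val_split[OF assms(1) _ assms(6)] by blast
  obtain q' where q': "coeff (Gp n b ^ (p ^ r)) m = of_int (int p ^ (r - k)) * q'" "quasi_const n p k q'"
    using power_coeff_split[OF ZP_Gp assms(1) _ ku(2,3)] ku(1) by (meson less_imp_le)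
  define l' where "l' = L * p ^ (r - k) - u"
  have prk: "p ^ r = p ^ (r - k) * p ^ k" using ku(1) by (simp flip: power_add)
  have "L * p ^ r > 0" using assms(4) p0 by simp
  then have "p ^ k * u < L * p ^ r" using assms(5) ku(2) by linarith
  then have "p ^ k * u < (L * p ^ (r - k)) * p ^ k" unfolding prk by (simp add: ac_simps)
  then have ulow: "u < L * p ^ (r - k)" using p0 by (simp add: mult.commute)
  then have l'1: "l' \<ge> 1" unfolding l'_def by simp
  have idx: "L * p ^ r - 1 - m = l' * p ^ k - 1"
  proof -
    have "l' * p ^ k = L * p ^ (r - k) * p ^ k - u * p ^ k" unfolding l'_def by (simp add: diff_mult_distrib)
    also have "\<dots> = L * p ^ r - m" unfolding prk ku(2) by (simp add: ac_simps)
    finally show ?thesis by simp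
  qed
  have "SP n p A W k k (\<lambda>j. Ivec n (\<lambda>_. Mv p r) (l' * p ^ k - 1) j)" by (rule IH[OF ku(1) l'1])
  then have "SP n p A W k k (\<lambda>j. q' * Ivec n (\<lambda>_. Mv p r) (l' * p ^ k - 1) j)" by (rule SP_scal) (rule q'(2))
  then have "SP n p A W r k (\<lambda>j. of_int (int p ^ (r - k)) * (q' * Ivec n (\<lambda>_. Mv p r) (l' * p ^ k - 1) j))"
    by (rule SP_lift) (use ku in auto)
  then have "SP n p A W r r (\<lambda>j. of_int (int p ^ (r - k)) * (q' * Ivec n (\<lambda>_. Mv p r) (l' * p ^ k - 1) j))"
    by (rule SP_mono) (use ku in auto)
  then show ?thesis by (rule SP_eq) (simp only: q'(1) idx mult.assoc)
qed

lemma key_T: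
  assumes "prime p" "odd p"
  shows "\<forall>M b l. (\<forall>i<2*g+1. M i = Mv p r + p ^ r * b i) \<longrightarrow> l \<ge> 1 \<longrightarrow>
     SP (2*g+1) p {1..g} (\<lambda>r l j. Istd (2*g+1) p r l j) r r (\<lambda>j. Ivec (2*g+1) M (l * p ^ r - 1) j)"
proof (induction r rule: less_induct)
  case (less r)
  let ?n = "2*g+1"
  let ?A = "{1..g}" and ?W = "\<lambda>r l j. Istd (2*g+1) p r l j"
  show ?case
  proof (cases "r = 0")
    case True then show ?thesis by (simp add: SP_triv)
  next
    case False
    then have r1: "r \<ge> 1" by simp
    have p1: "p > 1" using prime_gt_1_nat[OF assms(1)] by simp
    have p0: "p > 0" using p1 by simp
    have m1: "Mv p r \<ge> 1" by (rule Mv_pos[OF assms(2) p1 r1])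
    show ?thesis
    proof (intro allI impI)
      fix M b l assume Mb: "\<forall>i<?n. M i = Mv p r + p ^ r * b i" and l1: "(l::nat) \<ge> 1"
      let ?q = "\<lambda>m. coeff (Gp ?n b ^ (p ^ r)) m"
      let ?K = "l * p ^ r - 1"
      have dec: "Ivec ?n M ?K j = (\<Sum>m\<le>?K. ?q m * Ivec ?n (\<lambda>_. Mv p r) (?K - m) j)" for j
        by (rule Ivec_decomp) (use Mb m1 in auto)
      have IH: "\<And>k l'. k < r \<Longrightarrow> l' \<ge> 1 \<Longrightarrow> SP ?n p ?A ?W k k (\<lambda>j. Ivec ?n (\<lambda>_. Mv p r) (l' * p ^ k - 1) j)"
      proof -
        fix k l' assume k: "k < r" and l': "(l'::nat) \<ge> 1"
        show "SP ?n p ?A ?W k k (\<lambda>j. Ivec ?n (\<lambda>_. Mv p r) (l' * p ^ k - 1) j)"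
          apply (rule less.IH[OF k, rule_format, of "\<lambda>_. Mv p r" "\<lambda>_. Mv p (r - k)" l'])
          using Mv_split[OF assms(2), of k r] k l' by auto
      qed
      have "SP ?n p ?A ?W r r (\<lambda>j. \<Sum>m\<le>?K. ?q m * Ivec ?n (\<lambda>_. Mv p r) (?K - m) j)"
      proof (rule SP_sum)
        fix m assume m: "m \<in> {..?K}"
        show "SP ?n p ?A ?W r r (\<lambda>j. ?q m * Ivec ?n (\<lambda>_. Mv p r) (?K - m) j)"
        proof (cases "p ^ r dvd m")
          case True
          then obtain a where a: "m = a * p ^ r" by (metis dvdE mult.commute)
          have "a * p ^ r < l * p ^ r" using m a p0 l1
            by (metis atMost_iff le_imp_less_Suc less_eq_Suc_le mult_pos_pos nat_0_less_mult_iff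
                 One_nat_def Suc_pred le0 le_less_trans zero_less_power)
          then have al: "a < l" using p0 by simp
          have idx: "?K - m = (l - a) * p ^ r - 1" using a al by (simp add: diff_mult_distrib)
          have qq: "quasi_const ?n p r (?q m)" by (rule power_coeff_qc[OF ZP_Gp p0])
          show ?thesis
          proof (cases "l - a \<le> g")
            case True
            then have "l - a \<in> ?A" using al by simp
            from SP_scal[OF SP_gen[OF r1 this, of ?n p ?W] qq]
            show ?thesis by (rule SP_eq) (simp only: idx Istd_Mv)
          next
            case False
            then have z: "Istd ?n p r (l - a) j = 0" for j by (intro Istd_zero[OF assms(2) p1 r1]) simp
            show ?thesis
              by (intro SP_eq[OF SP_zero]) (simp only: idx Istd_Mv[symmetric] z mult_zero_right)
          qed
        next
          case False
          show ?thesis by (rule nonmult_term[OF assms r1 l1 _ False IH]) (use m in auto)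
        qed
      qed simp
      then show "SP ?n p ?A ?W r r (\<lambda>j. Ivec ?n M ?K j)" by (rule SP_eq) (rule dec)
    qed
  qed
qed



lemma M_repr:
  assumes "odd p" "r \<le> s" "int p ^ s dvd 2 * int Mi + 1"
  shows "Mi = Mv p r + p ^ r * ((Mi - Mv p r) div p ^ r)"
proof -
  have d: "int p ^ r dvd 2 * int Mi + 1"
    using assms(3) le_imp_power_dvd[OF assms(2), of "int p"] dvd_trans by blast
  have e: "2 * int (Mv p r) + 1 = int p ^ r" using Mv_eq[OF assms(1), of r] by (metis of_nat_1 of_nat_add of_nat_mult of_nat_numeral of_nat_power)
  have "int p ^ r dvd (2 * int Mi + 1) - (2 * int (Mv p r) + 1)" using d e by simp
  then have "int p ^ r dvd 2 * (int Mi - int (Mv p r))" by (simp add: algebra_simps)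
  moreover have "coprime (int p ^ r) 2" using assms(1) by (simp add: coprime_commute)
  ultimately have dd: "int p ^ r dvd (int Mi - int (Mv p r))" using coprime_dvd_mult_right_iff by blast
  have "int p ^ r \<le> 2 * int Mi + 1" using d by (rule zdvd_imp_le) simp
  then have ge: "Mv p r \<le> Mi" using e by linarith
  then have "int (Mi - Mv p r) = int Mi - int (Mv p r)" by simp
  with dd have "p ^ r dvd (Mi - Mv p r)" by (metis of_nat_dvd_iff of_nat_power)
  then have "Mi - Mv p r = p ^ r * ((Mi - Mv p r) div p ^ r)" by simp
  with ge show ?thesis by linarith
qed

lemma key_G:
  assumes "prime p" "odd p" "\<forall>i<2*g+1. int p ^ s dvd 2 * int (M i) + 1"
  shows "r \<le> s \<Longrightarrow> \<forall>l. 1 \<le> l \<and> l \<le> g \<longrightarrow>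
    SP (2*g+1) p {l. l \<ge> 1} (\<lambda>r l j. Ivec (2*g+1) M (l * p ^ r - 1) j) r r (\<lambda>j. Istd (2*g+1) p r l j)"
proof (induction r rule: less_induct)
  case (less r)
  let ?n = "2*g+1"
  let ?A = "{l::nat. l \<ge> 1}" and ?W = "\<lambda>r l j. Ivec (2*g+1) M (l * p ^ r - 1) j"
  show ?case
  proof (cases "r = 0")
    case True then show ?thesis by (simp add: SP_triv)
  next
    case False
    then have r1: "r \<ge> 1" by simp
    have p1: "p > 1" using prime_gt_1_nat[OF assms(1)] by simp
    have p0: "p > 0" using p1 by simp
    have m1: "Mv p r \<ge> 1" by (rule Mv_pos[OF assms(2) p1 r1])
    define b where "b = (\<lambda>i. (M i - Mv p r) div p ^ r)"
    have Mb: "\<And>i. i < ?n \<Longrightarrow> M i = Mv p r + p ^ r * b i"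
      unfolding b_def using M_repr[OF assms(2) less.prems] assms(3) by blast
    define D where "D = (\<Sum>i<?n. b i)"
    let ?q = "\<lambda>m. coeff (Gp ?n b ^ (p ^ r)) m"
    have outer: "\<And>r' l. r' \<in> {1..k} \<Longrightarrow> l \<in> {1..g} \<Longrightarrow> SP ?n p ?A ?W r' r' (\<lambda>j. Istd ?n p r' l j)"
      if "k < r" for k
      using less.IH less.prems that by auto
    have IH2: "\<And>k l'. k < r \<Longrightarrow> l' \<ge> 1 \<Longrightarrow> SP ?n p ?A ?W k k (\<lambda>j. Ivec ?n (\<lambda>_. Mv p r) (l' * p ^ k - 1) j)"
    proof -
      fix k l' assume k: "k < r" and l': "(l'::nat) \<ge> 1"
      have "SP ?n p {1..g} (\<lambda>r l j. Istd ?n p r l j) k k (\<lambda>j. Ivec ?n (\<lambda>_. Mv p r) (l' * p ^ k - 1) j)"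
        apply (rule key_T[OF assms(1,2), of g k, rule_format, of "\<lambda>_. Mv p r" "\<lambda>_. Mv p (r - k)" l'])
        using Mv_split[OF assms(2), of k r] k l' by auto
      then show "SP ?n p ?A ?W k k (\<lambda>j. Ivec ?n (\<lambda>_. Mv p r) (l' * p ^ k - 1) j)"
        by (rule SP_transfer) (use outer[OF k] in auto)
    qed
    have main: "\<forall>l. g - l = d \<longrightarrow> 1 \<le> l \<longrightarrow> l \<le> g \<longrightarrow> SP ?n p ?A ?W r r (\<lambda>j. Istd ?n p r l j)" for d
    proof (induction d rule: less_induct)
      case (less d)
      show ?case
      proof (intro allI impI)
        fix l assume ld: "g - l = d" and l1: "1 \<le> l" and lg: "l \<le> g"
        let ?K = "(l + D) * p ^ r - 1"
        define m0 where "m0 = p ^ r * D"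
        have dec: "Ivec ?n M ?K j = (\<Sum>m\<le>?K. ?q m * Ivec ?n (\<lambda>_. Mv p r) (?K - m) j)" for j
          by (rule Ivec_decomp) (use Mb m1 in auto)
        have m0K: "m0 \<in> {..?K}"
        proof -
          have "(l + D) * p ^ r = l * p ^ r + m0" unfolding m0_def by (simp add: algebra_simps)
          moreover have "l * p ^ r \<ge> 1" using l1 p0 by simp
          ultimately have "m0 \<le> (l + D) * p ^ r - 1" by linarith
          then show ?thesis by simp
        qed
        have top: "?q m0 = 1" unfolding m0_def D_def by (rule Gp_power_top(1))
        have idx0: "?K - m0 = l * p ^ r - 1" unfolding m0_def by (simp add: algebra_simps)
        have split: "Ivec ?n M ?K j = Istd ?n p r l j + (\<Sum>m\<in>{..?K} - {m0}. ?q m * Ivec ?n (\<lambda>_. Mv p r) (?K - m) j)" for j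
          unfolding dec sum.remove[OF finite_atMost m0K] top idx0 Istd_Mv by simp
        have rest: "SP ?n p ?A ?W r r (\<lambda>j. \<Sum>m\<in>{..?K} - {m0}. ?q m * Ivec ?n (\<lambda>_. Mv p r) (?K - m) j)"
        proof (rule SP_sum)
          fix m assume m: "m \<in> {..?K} - {m0}"
          show "SP ?n p ?A ?W r r (\<lambda>j. ?q m * Ivec ?n (\<lambda>_. Mv p r) (?K - m) j)"
          proof (cases "p ^ r dvd m")
            case True
            then obtain a where a: "m = a * p ^ r" by (metis dvdE mult.commute)
            have aD: "a \<noteq> D" using m a unfolding m0_def by auto
            show ?thesis
            proof (cases "a > D")
              case True
              then have "m > p ^ r * D" using a p0 by simp
              then have "?q m = 0" unfolding D_def by (rule Gp_power_top(2))
              then show ?thesis by (intro SP_eq[OF SP_zero]) simp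
            next
              case False
              then have aD': "a < D" using aD by simp
              have idx: "?K - m = (l + D - a) * p ^ r - 1" using a aD' by (simp add: diff_mult_distrib)
              have qq: "quasi_const ?n p r (?q m)" by (rule power_coeff_qc[OF ZP_Gp p0])
              show ?thesis
              proof (cases "l + D - a \<le> g")
                case True
                have "SP ?n p ?A ?W r r (\<lambda>j. Istd ?n p r (l + D - a) j)"
                  using less.IH[of "g - (l + D - a)"] True aD' ld lg l1 by auto
                from SP_scal[OF this qq]
                show ?thesis by (rule SP_eq) (simp only: idx Istd_Mv)
              next
                case False
                then have z: "Istd ?n p r (l + D - a) j = 0" for j by (intro Istd_zero[OF assms(2) p1 r1]) simp
                show ?thesis
                  by (intro SP_eq[OF SP_zero]) (simp only: idx Istd_Mv[symmetric] z mult_zero_right)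
              qed
            qed
          next
            case False
            have "l + D \<ge> 1" using l1 by simp
            show ?thesis by (rule nonmult_term[OF assms(1,2) r1 \<open>l + D \<ge> 1\<close> _ False IH2]) (use m in auto)
          qed
        qed simp
        have gen: "SP ?n p ?A ?W r r (\<lambda>j. Ivec ?n M ?K j)"
          using SP_gen[OF r1, of "l + D" ?A ?n p ?W] l1 by simp
        have "SP ?n p ?A ?W r r (\<lambda>j. Ivec ?n M ?K j + (- 1) * (\<Sum>m\<in>{..?K} - {m0}. ?q m * Ivec ?n (\<lambda>_. Mv p r) (?K - m) j))"
          by (intro SP_add gen SP_scal[OF rest]) simp
        then show "SP ?n p ?A ?W r r (\<lambda>j. Istd ?n p r l j)"
          by (rule SP_eq) (simp only: split, simp)
      qed
    qed
    show ?thesis using main by blast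
  qed
qed



theorem theorem5p2:
  fixes p g s :: nat and M :: "nat \<Rightarrow> nat"
  assumes "prime p" and "odd p" and "g \<ge> 1" and "p > 2*g+1" and "s \<ge> 1"
    and "\<forall>i < 2*g+1. M i > 0 \<and> (int p ^ s) dvd (2 * int (M i) + 1)"
  shows "\<forall>t \<in> {1..s}. Mgen p g s t M = Mstd p g s t"
proof
  fix t assume t: "t \<in> {1..s}"
  let ?n = "2*g+1"
  let ?A1 = "{1..g}" and ?W1 = "\<lambda>r l j. Istd (2*g+1) p r l j"
  let ?A2 = "{l::nat. l \<ge> 1}" and ?W2 = "\<lambda>r l j. Ivec (2*g+1) M (l * p ^ r - 1) j"
  have dvdM: "\<forall>i<?n. int p ^ s dvd 2 * int (M i) + 1" using assms(6) by blast
  have ts: "t \<le> s" using t by simp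
  show "Mgen p g s t M = Mstd p g s t"
  proof
    show "Mgen p g s t M \<subseteq> Mstd p g s t"
    proof
      fix x assume "x \<in> Mgen p g s t M"
      then obtain c where x: "x = (\<lambda>j. pi_mod p s
          (\<Sum>r \<in> {1..t}. \<Sum>l \<in> {l. 1 \<le> l \<and> c r l \<noteq> 0}.
            c r l * of_int (int p ^ (s - r)) * Ivec ?n M (l * p ^ r - 1) j))"
        and cc: "\<forall>r \<in> {1..t}. finite {l. c r l \<noteq> 0} \<and> (\<forall>l \<ge> 1. quasi_const ?n p r (c r l))"
        unfolding Mgen_def by blast
      define V where "V = (\<lambda>j. \<Sum>r \<in> {1..t}. \<Sum>l \<in> {l. 1 \<le> l \<and> c r l \<noteq> 0}.
            c r l * of_int (int p ^ (s - r)) * Ivec ?n M (l * p ^ r - 1) j)"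
      have "SP ?n p ?A1 ?W1 s t V"
        unfolding V_def
      proof (intro SP_sum)
        fix r l assume r: "r \<in> {1..t}" and l: "l \<in> {l. 1 \<le> l \<and> c r l \<noteq> 0}"
        have rs: "r \<le> s" using r ts by simp
        define b where "b = (\<lambda>i. (M i - Mv p r) div p ^ r)"
        have Mb: "\<And>i. i < ?n \<Longrightarrow> M i = Mv p r + p ^ r * b i"
          unfolding b_def using M_repr[OF assms(2) rs] dvdM by blast
        have "SP ?n p ?A1 ?W1 r r (\<lambda>j. Ivec ?n M (l * p ^ r - 1) j)"
          using key_T[OF assms(1,2), of g r, rule_format, OF Mb] l by simp
        then have "SP ?n p ?A1 ?W1 r r (\<lambda>j. c r l * Ivec ?n M (l * p ^ r - 1) j)"
          by (rule SP_scal) (use cc r l in auto)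
        then have "SP ?n p ?A1 ?W1 s r (\<lambda>j. of_int (int p ^ (s - r)) * (c r l * Ivec ?n M (l * p ^ r - 1) j))"
          by (rule SP_lift) (use rs in auto)
        then have "SP ?n p ?A1 ?W1 s t (\<lambda>j. of_int (int p ^ (s - r)) * (c r l * Ivec ?n M (l * p ^ r - 1) j))"
          by (rule SP_mono) (use r in auto)
        then show "SP ?n p ?A1 ?W1 s t (\<lambda>j. c r l * of_int (int p ^ (s - r)) * Ivec ?n M (l * p ^ r - 1) j)"
          by (rule SP_eq) (simp add: ac_simps)
      next
        fix r assume r: "r \<in> {1..t}"
        show "finite {l. 1 \<le> l \<and> c r l \<noteq> 0}"
          by (rule finite_subset[of _ "{l. c r l \<noteq> 0}"]) (use cc r in auto)
      qed simp
      then obtain c' where c': "cok ?n p ?A1 t c'" "\<forall>j. \<exists>h. V j = SE p ?W1 c' s t j + of_int (int p ^ s) * h"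
        unfolding SP_alt by blast
      have SEe: "SE p ?W1 c' s t j = (\<Sum>r \<in> {1..t}. \<Sum>l \<in> {1..g}. c' r l * of_int (int p ^ (s - r)) * Istd ?n p r l j)" for j
      proof -
        have "SE p ?W1 c' s t j = (\<Sum>r \<in> {1..t}. \<Sum>l \<in> {1..g}. c' r l * (of_int (int p ^ (s - r)) * Istd ?n p r l j))"
        proof (rule SE_sets)
          fix r assume r: "r \<in> {1..t}"
          then have "\<forall>l. l \<notin> {1..g} \<longrightarrow> c' r l = 0" using c'(1) unfolding cok_def by blast
          then show "finite {1..g} \<and> {l. c' r l \<noteq> 0} \<subseteq> {1..g}" by blast
        qed
        then show ?thesis by (simp add: mult.assoc)
      qed
      have "x = (\<lambda>j. pi_mod p s (\<Sum>r \<in> {1..t}. \<Sum>l \<in> {1..g}. c' r l * of_int (int p ^ (s - r)) * Istd ?n p r l j))"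
      proof
        fix j
        obtain h where "V j = SE p ?W1 c' s t j + of_int (int p ^ s) * h" using c'(2) by blast
        then have e: "pi_mod p s (V j) = pi_mod p s (SE p ?W1 c' s t j)" by (rule pi_mod_cong)
        have "x j = pi_mod p s (V j)" by (simp add: x V_def)
        also note e
        also have "pi_mod p s (SE p ?W1 c' s t j) = pi_mod p s (\<Sum>r \<in> {1..t}. \<Sum>l \<in> {1..g}. c' r l * of_int (int p ^ (s - r)) * Istd ?n p r l j)"
          by (simp only: SEe)
        finally show "x j = pi_mod p s (\<Sum>r \<in> {1..t}. \<Sum>l \<in> {1..g}. c' r l * of_int (int p ^ (s - r)) * Istd ?n p r l j)" .
      qed
      moreover have "\<forall>r \<in> {1..t}. \<forall>l \<in> {1..g}. quasi_const ?n p r (c' r l)"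
        using c'(1) unfolding cok_def by blast
      ultimately show "x \<in> Mstd p g s t" unfolding Mstd_def by blast
    qed
  next
    show "Mstd p g s t \<subseteq> Mgen p g s t M"
    proof
      fix x assume "x \<in> Mstd p g s t"
      then obtain c where x: "x = (\<lambda>j. pi_mod p s
          (\<Sum>r \<in> {1..t}. \<Sum>l \<in> {1..g}. c r l * of_int (int p ^ (s - r)) * Istd ?n p r l j))"
        and cc: "\<forall>r \<in> {1..t}. \<forall>l \<in> {1..g}. quasi_const ?n p r (c r l)"
        unfolding Mstd_def by blast
      define V where "V = (\<lambda>j. \<Sum>r \<in> {1..t}. \<Sum>l \<in> {1..g}. c r l * of_int (int p ^ (s - r)) * Istd ?n p r l j)"
      have "SP ?n p ?A2 ?W2 s t V"
        unfolding V_def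
      proof (intro SP_sum)
        fix r l assume r: "r \<in> {1..t}" and l: "l \<in> {1..g}"
        have rs: "r \<le> s" using r ts by simp
        have "SP ?n p ?A2 ?W2 r r (\<lambda>j. Istd ?n p r l j)"
          using key_G[OF assms(1,2) dvdM rs] l by simp
        then have "SP ?n p ?A2 ?W2 r r (\<lambda>j. c r l * Istd ?n p r l j)"
          by (rule SP_scal) (use cc r l in auto)
        then have "SP ?n p ?A2 ?W2 s r (\<lambda>j. of_int (int p ^ (s - r)) * (c r l * Istd ?n p r l j))"
          by (rule SP_lift) (use rs in auto)
        then have "SP ?n p ?A2 ?W2 s t (\<lambda>j. of_int (int p ^ (s - r)) * (c r l * Istd ?n p r l j))"
          by (rule SP_mono) (use r in auto)
        then show "SP ?n p ?A2 ?W2 s t (\<lambda>j. c r l * of_int (int p ^ (s - r)) * Istd ?n p r l j)"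
          by (rule SP_eq) (simp add: ac_simps)
      qed simp_all
      then obtain c' where c': "cok ?n p ?A2 t c'" "\<forall>j. \<exists>h. V j = SE p ?W2 c' s t j + of_int (int p ^ s) * h"
        unfolding SP_alt by blast
      have SEe: "SE p ?W2 c' s t j = (\<Sum>r \<in> {1..t}. \<Sum>l \<in> {l. 1 \<le> l \<and> c' r l \<noteq> 0}.
            c' r l * of_int (int p ^ (s - r)) * Ivec ?n M (l * p ^ r - 1) j)" for j
        unfolding SE_def
      proof (rule sum.cong[OF refl])
        fix r assume r: "r \<in> {1..t}"
        have "{l. c' r l \<noteq> 0} = {l. 1 \<le> l \<and> c' r l \<noteq> 0}" using c'(1) r unfolding cok_def by auto
        then show "(\<Sum>l\<in>{l. c' r l \<noteq> 0}. c' r l * of_int (int p ^ (s - r)) * Ivec ?n M (l * p ^ r - 1) j) =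
           (\<Sum>l \<in> {l. 1 \<le> l \<and> c' r l \<noteq> 0}. c' r l * of_int (int p ^ (s - r)) * Ivec ?n M (l * p ^ r - 1) j)"
          by simp
      qed
      have "x = (\<lambda>j. pi_mod p s (\<Sum>r \<in> {1..t}. \<Sum>l \<in> {l. 1 \<le> l \<and> c' r l \<noteq> 0}.
            c' r l * of_int (int p ^ (s - r)) * Ivec ?n M (l * p ^ r - 1) j))"
      proof
        fix j
        obtain h where "V j = SE p ?W2 c' s t j + of_int (int p ^ s) * h" using c'(2) by blast
        then have e: "pi_mod p s (V j) = pi_mod p s (SE p ?W2 c' s t j)" by (rule pi_mod_cong)
        have "x j = pi_mod p s (V j)" by (simp add: x V_def)
        also note e
        also have "pi_mod p s (SE p ?W2 c' s t j) = pi_mod p s (\<Sum>r \<in> {1..t}. \<Sum>l \<in> {l. 1 \<le> l \<and> c' r l \<noteq> 0}.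
            c' r l * of_int (int p ^ (s - r)) * Ivec ?n M (l * p ^ r - 1) j)"
          by (simp only: SEe)
        finally show "x j = pi_mod p s (\<Sum>r \<in> {1..t}. \<Sum>l \<in> {l. 1 \<le> l \<and> c' r l \<noteq> 0}.
            c' r l * of_int (int p ^ (s - r)) * Ivec ?n M (l * p ^ r - 1) j)" .
      qed
      moreover have "\<forall>r \<in> {1..t}. finite {l. c' r l \<noteq> 0} \<and> (\<forall>l \<ge> 1. quasi_const ?n p r (c' r l))"
        using c'(1) unfolding cok_def by auto
      ultimately show "x \<in> Mgen p g s t M" unfolding Mgen_def by blast
    qed
  qed
qed

end
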